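(* Let $q$ be a prime power, $s\ge 2$ an integer, $v=2s$, and let $V$ be a $v$-dimensional vector space over $\mathrm{GF}(q)$. Let $\mathcal{G}$ be a Desarguesian $1$-spread of $V$. Let $L$ be a $2$-dimensional subspace of $V$ not contained in any element of $\mathcal{G}$. Then the number of $4$-dimensional subspaces of $V$ containing $L$ that are scattered with respect to $\mathcal{G}$ equals \[ \lambda_{\max}=\begin{bmatrix} v-2\\ 2\end{bmatrix}_q-1-q\begin{bmatrix} 2\\ 1\end{bmatrix}_q\begin{bmatrix} v-4\\ 1\end{bmatrix}_q-\begin{bmatrix} v\\ 1\end{bmatrix}_q\Big/\begin{bmatrix} 2\\ 1\end{bmatrix}_q+\begin{bmatrix} 4\\ 1\end{bmatrix}_q\Big/\begin{bmatrix} 2\\ 1\end{bmatrix}_q . \]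
   Context: For integers $0\le m\le n$, $\begin{bmatrix} n\\ m\end{bmatrix}_q=\prod_{i=0}^{m-1}\frac{q^{n-i}-1}{q^{m-i}-1}$ is the Gaussian coefficient. A $1$-spread of $V$ is a set of $2$-dimensional subspaces of $V$ such that every $1$-dimensional subspace of $V$ lies in exactly one of them. The Desarguesian $1$-spread of $\mathrm{GF}(q^2)^s$, viewed as a $2s$-dimensional $\mathrm{GF}(q)$-vector space, is the set of all $1$-dimensional $\mathrm{GF}(q^2)$-subspaces of $\mathrm{GF}(q^2)^s$ (each being a $2$-dimensional $\mathrm{GF}(q)$-subspace); a $1$-spread of $V$ is Desarguesian if it is the image of this spread under some $\mathrm{GF}(q)$-linear isomorphism $\mathrm{GF}(q^2)^s\to V$. A subspace $B\le V$ is scattered with respect to $\mathcal{G}$ if $B$ contains no $2$-dimensional subspace contained in an element of $\mathcal{G}$ (equivalently, $\dim(B\cap S)\le 1$ for all $S\in\mathcal{G}$). *)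

theory Defs
  imports Complex_Main "HOL-Library.Function_Algebras" "HOL-Library.Cardinality"
begin

definition gauss_coeff :: "nat \<Rightarrow> nat \<Rightarrow> nat \<Rightarrow> real" where
  "gauss_coeff q n m = (\<Prod>i<m. (real q ^ (n - i) - 1) / (real q ^ (m - i) - 1))"

definition subspaces_of_dim :: "('a::field \<Rightarrow> 'v::ab_group_add \<Rightarrow> 'v) \<Rightarrow> nat \<Rightarrow> 'v set set" where
  "subspaces_of_dim scale k = {S. module.subspace scale S \<and> vector_space.dim scale S = k}"

definition is_1_spread :: "('a::field \<Rightarrow> 'v::ab_group_add \<Rightarrow> 'v) \<Rightarrow> 'v set set \<Rightarrow> bool" where
  "is_1_spread scale G \<longleftrightarrow> G \<subseteq> subspaces_of_dim scale 2 \<and>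
     (\<forall>P \<in> subspaces_of_dim scale 1. \<exists>!S. S \<in> G \<and> P \<subseteq> S)"

definition field_emb :: "('a::field \<Rightarrow> 'b::field) \<Rightarrow> bool" where
  "field_emb phi \<longleftrightarrow> inj phi \<and> phi 1 = 1 \<and>
     (\<forall>x y. phi (x + y) = phi x + phi y) \<and> (\<forall>x y. phi (x * y) = phi x * phi y)"

text \<open>GF(q^2)^s (vectors indexed by the finite type 's) viewed as GF(q)-space via phi.\<close>
definition restr_scale :: "('a::field \<Rightarrow> 'b::field) \<Rightarrow> 'a \<Rightarrow> ('s \<Rightarrow> 'b) \<Rightarrow> ('s \<Rightarrow> 'b)" where
  "restr_scale phi c x = (\<lambda>i. phi c * x i)"

text \<open>The Desarguesian 1-spread: all 1-dimensional GF(q^2)-subspaces of GF(q^2)^s.\<close>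
definition desarg_spread_std :: "('s \<Rightarrow> 'b::field) set set" where
  "desarg_spread_std = {range (\<lambda>a::'b. (\<lambda>i. a * x i)) | x. x \<noteq> 0}"

definition is_desarguesian_spread ::
  "('a::field \<Rightarrow> 'b::field) \<Rightarrow> 's itself \<Rightarrow> ('a \<Rightarrow> 'v::ab_group_add \<Rightarrow> 'v) \<Rightarrow> 'v set set \<Rightarrow> bool" where
  "is_desarguesian_spread phi (_::'s itself) scale G \<longleftrightarrow>
     (\<exists>f :: ('s \<Rightarrow> 'b) \<Rightarrow> 'v. Vector_Spaces.linear (restr_scale phi) scale f \<and> bij f \<and>
        G = (\<lambda>P. f ` P) ` (desarg_spread_std :: ('s \<Rightarrow> 'b) set set))"

definition scattered :: "('a::field \<Rightarrow> 'v::ab_group_add \<Rightarrow> 'v) \<Rightarrow> 'v set set \<Rightarrow> 'v set \<Rightarrow> bool" where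
  "scattered scale G B \<longleftrightarrow>
     \<not> (\<exists>W \<in> subspaces_of_dim scale 2. W \<subseteq> B \<and> (\<exists>S \<in> G. W \<subseteq> S))"

end

theory Submission
  imports Defs
begin

lemma card_fibers:
  assumes "finite X" "finite Y" "f ` X \<subseteq> Y" "\<And>y. y \<in> Y \<Longrightarrow> card {x\<in>X. f x = y} = k"
  shows "card X = k * card Y"
proof -
  have "X = (\<Union>y\<in>Y. {x\<in>X. f x = y})" using assms(3) by auto
  moreover have "card (\<Union>y\<in>Y. {x\<in>X. f x = y}) = (\<Sum>y\<in>Y. card {x\<in>X. f x = y})"
    by (rule card_UN_disjoint) (use assms in auto)
  ultimately show ?thesis using assms(4) by simp
qed

lemma card_ge2: "2 \<le> CARD('a::{finite,field})"
proof -
  have "card {0::'a,1} = 2" by simp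
  moreover have "card {0::'a,1} \<le> CARD('a)" by (rule card_mono) simp_all
  ultimately show ?thesis by linarith
qed

locale fvs = vector_space scale for scale :: "'a::{finite,field} \<Rightarrow> 'v::ab_group_add \<Rightarrow> 'v" (infixr \<open>*s\<close> 75) +
  assumes finV: "finite (UNIV :: 'v set)"
begin

lemma fin: "finite (A :: 'v set)"
  by (rule finite_subset[OF subset_UNIV finV])

lemma q_ge2: "CARD('a) \<ge> 2"
  by (rule card_ge2)

lemma span_insert_img:
  "span (insert x U) = (\<lambda>(k,u). k *s x + u) ` (UNIV \<times> span U)"
proof (rule set_eqI)
  fix z
  show "z \<in> span (insert x U) \<longleftrightarrow> z \<in> (\<lambda>(k,u). k *s x + u) ` (UNIV \<times> span U)"
    unfolding span_insert
  proof
    assume "z \<in> {x'. \<exists>k. x' - k *s x \<in> span U}"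
    then obtain k where "z - k *s x \<in> span U" by auto
    then show "z \<in> (\<lambda>(k,u). k *s x + u) ` (UNIV \<times> span U)"
      by (intro image_eqI[of _ _ "(k, z - k *s x)"]) auto
  next
    assume "z \<in> (\<lambda>(k,u). k *s x + u) ` (UNIV \<times> span U)"
    then obtain k u where "u \<in> span U" "z = k *s x + u" by auto
    then show "z \<in> {x'. \<exists>k. x' - k *s x \<in> span U}" by (auto intro!: exI[of _ k])
  qed
qed

lemma card_span_insert:
  assumes "x \<notin> span U"
  shows "card (span (insert x U)) = CARD('a) * card (span U)"
proof -
  have "inj_on (\<lambda>(k,u). k *s x + u) (UNIV \<times> span U)"
  proof (rule inj_onI, clarify)
    fix k u k' u'
    assume u: "u \<in> span U" "u' \<in> span U" and e: "k *s x + u = k' *s x + u'"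
    then have "(k - k') *s x = u' - u" by (simp add: algebra_simps scale_left_diff_distrib)
    then have "(k - k') *s x \<in> span U" using u span_diff by simp
    have "k = k'"
    proof (rule ccontr)
      assume "k \<noteq> k'"
      then have "inverse (k - k') *s ((k - k') *s x) = x" by simp
      then show False using assms span_scale[OF \<open>(k - k') *s x \<in> span U\<close>, of "inverse (k - k')"] by simp
    qed
    then show "k = k' \<and> u = u'" using e by simp
  qed
  then show ?thesis
    by (simp add: span_insert_img card_image card_cartesian_product)
qed

lemma card_span_indep:
  "finite B \<Longrightarrow> independent B \<Longrightarrow> card (span B) = CARD('a) ^ card B"
proof (induction B rule: finite_induct)
  case empty
  then show ?case by simp
next
  case (insert x F)
  then have "independent F" "x \<notin> span F" by (auto simp: independent_insert)
  then show ?case using insert by (simp add: card_span_insert)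
qed

lemma card_subspace:
  assumes "subspace S" shows "card S = CARD('a) ^ dim S"
proof -
  obtain B where B: "B \<subseteq> S" "independent B" "S \<subseteq> span B" "card B = dim S"
    by (rule basis_exists)
  then have "span B = S" using span_minimal[OF B(1) assms] by auto
  then show ?thesis using card_span_indep[of B] B fin[of B] by simp
qed

lemma pow_inj: "CARD('a) ^ m = CARD('a) ^ n \<Longrightarrow> m = n"
  using q_ge2 by (simp add: power_inject_exp)

lemma dim_card_eq:
  assumes "subspace A" "subspace B" shows "dim A = dim B \<longleftrightarrow> card A = card B"
  using card_subspace[OF assms(1)] card_subspace[OF assms(2)] pow_inj by auto

lemma subspace_eq_dim:
  fixes A B :: "'v set"
  assumes "subspace A" "subspace B" "A \<subseteq> B" "dim A = dim B" shows "A = B"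
  using assms card_subset_eq[of B A] fin[of B] dim_card_eq[OF assms(1,2)] by auto

lemma subspace_eq_card:
  fixes A B :: "'v set"
  assumes "A \<subseteq> B" "card A = card B" shows "A = B"
  using card_subset_eq[of B A] assms fin[of B] by simp

lemma fin2: "finite (X :: 'v set set)"
proof -
  have "finite (Pow (UNIV :: 'v set))" by (rule finite_Pow_iff[THEN iffD2, OF finV])
  then show ?thesis by (rule finite_subset[rotated]) auto
qed

definition ssum :: "'v set \<Rightarrow> 'v set \<Rightarrow> 'v set" where
  "ssum A B = {x + y | x y. x \<in> A \<and> y \<in> B}"

lemma subspace_ssum: "subspace A \<Longrightarrow> subspace B \<Longrightarrow> subspace (ssum A B)"
  unfolding ssum_def by (rule subspace_sums)

lemma ssum_sup1: assumes "subspace B" shows "A \<subseteq> ssum A B"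
proof
  fix x assume "x \<in> A"
  then show "x \<in> ssum A B" unfolding ssum_def using subspace_0[OF assms]
    by (intro CollectI exI[of _ x] exI[of _ 0]) simp
qed

lemma ssum_sup2: assumes "subspace A" shows "B \<subseteq> ssum A B"
proof
  fix x assume "x \<in> B"
  then show "x \<in> ssum A B" unfolding ssum_def using subspace_0[OF assms]
    by (intro CollectI exI[of _ 0] exI[of _ x]) simp
qed

lemma ssum_least: "subspace C \<Longrightarrow> A \<subseteq> C \<Longrightarrow> B \<subseteq> C \<Longrightarrow> ssum A B \<subseteq> C"
  unfolding ssum_def by (blast intro: subspace_add)

lemma card_ssum:
  assumes A: "subspace A" and B: "subspace B"
  shows "card (A \<times> B) = card (A \<inter> B) * card (ssum A B)"
proof (rule card_fibers[of _ _ "\<lambda>(a,b). a + b"])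
  show "(\<lambda>(a,b). a + b) ` (A \<times> B) \<subseteq> ssum A B" unfolding ssum_def by auto
next
  fix z assume "z \<in> ssum A B"
  then obtain a0 b0 where ab: "a0 \<in> A" "b0 \<in> B" "z = a0 + b0" unfolding ssum_def by auto
  have seteq: "{x \<in> A \<times> B. (\<lambda>(a,b). a + b) x = z} = (\<lambda>t. (a0 + t, b0 - t)) ` (A \<inter> B)"
  proof (rule set_eqI, rule iffI)
    fix x assume x: "x \<in> {x \<in> A \<times> B. (\<lambda>(a,b). a + b) x = z}"
    then obtain a b where xab: "x = (a,b)" "a \<in> A" "b \<in> B" "a + b = z" by auto
    have e1: "a - a0 \<in> A" using A ab xab subspace_diff by blast
    have e2: "a - a0 = b0 - b" using ab xab by (simp add: algebra_simps)
    have e3: "b = b0 - (a - a0)" using ab xab by (simp add: eq_diff_eq algebra_simps)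
    have e4: "b0 - b \<in> B" using B ab xab subspace_diff by blast
    have m: "a - a0 \<in> A \<inter> B" using e1 e2 e4 by simp
    have eq: "x = (\<lambda>t. (a0 + t, b0 - t)) (a - a0)"
      using xab(1) e3 by (simp add: algebra_simps)
    show "x \<in> (\<lambda>t. (a0 + t, b0 - t)) ` (A \<inter> B)" using eq m by blast
  next
    fix x assume "x \<in> (\<lambda>t. (a0 + t, b0 - t)) ` (A \<inter> B)"
    then obtain t where "t \<in> A" "t \<in> B" "x = (a0 + t, b0 - t)" by auto
    moreover have "a0 + t \<in> A" using ab A \<open>t \<in> A\<close> subspace_add by blast
    moreover have "b0 - t \<in> B" using ab B \<open>t \<in> B\<close> subspace_diff by blast
    moreover have "a0 + t + (b0 - t) = z" using ab by simp
    ultimately show "x \<in> {x \<in> A \<times> B. (\<lambda>(a,b). a + b) x = z}" by simp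
  qed
  have inj: "inj_on (\<lambda>t. (a0 + t, b0 - t)) (A \<inter> B)" by (rule inj_onI) auto
  show "card {x \<in> A \<times> B. (\<lambda>(a,b). a + b) x = z} = card (A \<inter> B)"
    unfolding seteq by (rule card_image[OF inj])
qed (blast intro: finite_cartesian_product fin)+

lemma card_ssum': "subspace A \<Longrightarrow> subspace B \<Longrightarrow> card (A \<inter> B) * card (ssum A B) = card A * card B"
  using card_ssum by (simp add: card_cartesian_product)

lemma count_ext:
  assumes U: "subspace U" and A: "subspace A" and UA: "U \<subseteq> A"
  shows "card {T. subspace T \<and> U \<subseteq> T \<and> T \<subseteq> A \<and> dim T = Suc (dim U)}
           * (CARD('a) ^ Suc (dim U) - CARD('a) ^ dim U) = CARD('a) ^ dim A - CARD('a) ^ dim U"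
proof -
  let ?Y = "{T. subspace T \<and> U \<subseteq> T \<and> T \<subseteq> A \<and> dim T = Suc (dim U)}"
  have spU: "span U = U" using U by simp
  have dimins: "dim (span (insert x U)) = Suc (dim U)" if "x \<notin> U" for x
  proof -
    have "card (span (insert x U)) = CARD('a) ^ Suc (dim U)"
      using card_span_insert[of x U] that spU card_subspace[OF U] by simp
    then show ?thesis using card_subspace[of "span (insert x U)"] pow_inj by simp
  qed
  have h1: "card (A - U) = (CARD('a) ^ Suc (dim U) - CARD('a) ^ dim U) * card ?Y"
  proof (rule card_fibers[of _ _ "\<lambda>x. span (insert x U)"])
    show "(\<lambda>x. span (insert x U)) ` (A - U) \<subseteq> ?Y"
    proof clarify
      fix x assume x: "x \<in> A" "x \<notin> U"
      show "subspace (span (insert x U)) \<and> U \<subseteq> span (insert x U) \<and> span (insert x U) \<subseteq> A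
            \<and> dim (span (insert x U)) = Suc (dim U)"
      proof (intro conjI)
        show "U \<subseteq> span (insert x U)" using span_superset[of "insert x U"] by blast
        show "span (insert x U) \<subseteq> A" using span_minimal[of "insert x U" A] A x UA by blast
        show "subspace (span (insert x U))" by simp
        show "dim (span (insert x U)) = Suc (dim U)" by (rule dimins[OF x(2)])
      qed
    qed
  next
    fix T assume T: "T \<in> ?Y"
    have "{x \<in> A - U. span (insert x U) = T} = T - U"
    proof (rule set_eqI, rule iffI)
      fix x assume "x \<in> {x \<in> A - U. span (insert x U) = T}"
      then show "x \<in> T - U" using span_superset[of "insert x U"] by auto
    next
      fix x assume x: "x \<in> T - U"
      have "span (insert x U) \<subseteq> T" using span_minimal[of "insert x U" T] T x by auto
      moreover have "dim (span (insert x U)) = dim T" using dimins x T by auto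
      ultimately have "span (insert x U) = T" using subspace_eq_dim T by auto
      then show "x \<in> {x \<in> A - U. span (insert x U) = T}" using x T by auto
    qed
    moreover have "card (T - U) = card T - card U" using T fin[of U] by (simp add: card_Diff_subset)
    ultimately show "card {x \<in> A - U. span (insert x U) = T} = CARD('a) ^ Suc (dim U) - CARD('a) ^ dim U"
      using card_subspace[OF U] card_subspace[of T] T by simp
  qed (rule fin, rule fin2)
  have h2: "card (A - U) = CARD('a) ^ dim A - CARD('a) ^ dim U"
    using UA card_subspace[OF U] card_subspace[OF A] fin[of U] by (simp add: card_Diff_subset)
  have "card ?Y * (CARD('a) ^ Suc (dim U) - CARD('a) ^ dim U) = card (A - U)"
    unfolding h1 by (rule mult.commute)
  also have "\<dots> = CARD('a) ^ dim A - CARD('a) ^ dim U" by (rule h2)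
  finally show ?thesis .
qed

end

lemma cnt_if: "finite A \<Longrightarrow> card {y\<in>A. P y} = (\<Sum>y\<in>A. if P y then 1 else 0)"
  by (simp add: sum.If_cases Int_def)
lemma double_count:
  assumes "finite X" "finite Y"
  shows "(\<Sum>x\<in>X. card {y\<in>Y. R x y}) = (\<Sum>y\<in>Y. card {x\<in>X. R x y})"
proof -
  have "(\<Sum>x\<in>X. card {y\<in>Y. R x y}) = (\<Sum>x\<in>X. \<Sum>y\<in>Y. if R x y then 1 else 0)"
    using assms(2) by (simp only: cnt_if)
  also have "\<dots> = (\<Sum>y\<in>Y. \<Sum>x\<in>X. if R x y then 1 else 0)" by (rule sum.swap)
  also have "\<dots> = (\<Sum>y\<in>Y. card {x\<in>X. R x y})"
    using assms(1) by (simp only: cnt_if)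
  finally show ?thesis .
qed

locale dsetup = fvs scale for scale :: "'a::{finite,field} \<Rightarrow> 'v::ab_group_add \<Rightarrow> 'v" (infixr \<open>*s\<close> 75) +
  fixes phi :: "'a \<Rightarrow> 'b::{finite,field}" and f :: "('s::finite \<Rightarrow> 'b) \<Rightarrow> 'v" and G :: "'v set set"
  assumes fadd: "f (a + b) = f a + f b"
    and fscale: "f (restr_scale phi r a) = r *s f a"
    and fbij: "bij f"
    and Gdef: "G = (\<lambda>P. f ` P) ` desarg_spread_std"
    and G2: "\<And>S. S \<in> G \<Longrightarrow> subspace S \<and> dim S = 2"
begin

definition g where "g = inv f"

lemma fg[simp]: "f (g w) = w"
  unfolding g_def using fbij by (simp add: bij_is_surj surj_f_inv_f)

lemma gf[simp]: "g (f a) = a"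
  unfolding g_def using fbij by (simp add: bij_is_inj inv_f_f)

lemma f0[simp]: "f 0 = 0"
proof -
  have "f 0 = f 0 + f 0" using fadd[of 0 0] by simp
  then show ?thesis by simp
qed

lemma f_eq0: "f a = 0 \<longleftrightarrow> a = 0"
  by (metis f0 gf)

lemma g_add: "g (u + w) = g u + g w"
  by (metis fadd fg gf)

definition bmul :: "'b \<Rightarrow> 'v \<Rightarrow> 'v" where
  "bmul c w = f (\<lambda>i. c * g w i)"

lemma bmul_add: "bmul c (u + w) = bmul c u + bmul c w"
proof -
  have "(\<lambda>i. c * g (u + w) i) = (\<lambda>i. c * g u i) + (\<lambda>i. c * g w i)"
    by (simp add: g_add fun_eq_iff distrib_left)
  then show ?thesis unfolding bmul_def by (simp add: fadd)
qed

lemma bmul_add_left: "bmul (c + d) w = bmul c w + bmul d w"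
proof -
  have "(\<lambda>i. (c + d) * g w i) = (\<lambda>i. c * g w i) + (\<lambda>i. d * g w i)"
    by (simp add: fun_eq_iff distrib_right)
  then show ?thesis unfolding bmul_def by (simp add: fadd)
qed

lemma bmul_bmul: "bmul c (bmul d w) = bmul (c * d) w"
  unfolding bmul_def by (simp add: mult.assoc)

lemma bmul_phi: "bmul (phi a) w = a *s w"
proof -
  have "bmul (phi a) w = f (restr_scale phi a (g w))"
    unfolding bmul_def restr_scale_def by simp
  then show ?thesis using fscale by simp
qed

lemma bmul_one: "bmul 1 w = w"
  unfolding bmul_def by simp

lemma bmul_zero: "bmul 0 w = 0"
proof -
  have "(\<lambda>i. 0 * g w i) = 0" by (simp add: fun_eq_iff)
  then show ?thesis unfolding bmul_def by simp
qed

definition Sp :: "'v \<Rightarrow> 'v set" where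
  "Sp w = range (\<lambda>c. bmul c w)"

lemma Sp_G: assumes "w \<noteq> 0" shows "Sp w \<in> G"
proof -
  have x: "g w \<noteq> 0" using assms fg f0 by metis
  have "range (\<lambda>a::'b. (\<lambda>i. a * g w i)) \<in> (desarg_spread_std :: ('s \<Rightarrow> 'b) set set)"
    unfolding desarg_spread_std_def using x by blast
  moreover have "Sp w = f ` range (\<lambda>a::'b. (\<lambda>i. a * g w i))"
    unfolding Sp_def bmul_def by (simp add: image_image)
  ultimately show ?thesis unfolding Gdef by blast
qed

lemma G_Sp: assumes "S \<in> G" obtains w where "w \<noteq> 0" "S = Sp w"
proof -
  obtain x :: "'s \<Rightarrow> 'b" where x: "x \<noteq> 0" "S = f ` range (\<lambda>a. (\<lambda>i. a * x i))"
    using assms unfolding Gdef desarg_spread_std_def by blast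
  have "S = Sp (f x)" unfolding x(2) Sp_def bmul_def by (simp add: image_image)
  moreover have "f x \<noteq> 0" using x(1) f_eq0 by simp
  ultimately show ?thesis using that by blast
qed

lemma G_sub: "S \<in> G \<Longrightarrow> subspace S" using G2 by blast

lemma G_card: "S \<in> G \<Longrightarrow> card S = CARD('a) ^ 2"
  using G2 card_subspace by metis

lemma in_Sp: "w \<in> Sp w" unfolding Sp_def using bmul_one by (metis rangeI)

lemma zero_Sp: "0 \<in> Sp w" unfolding Sp_def using bmul_zero by (metis rangeI)

lemma Sp_sub: "z \<in> Sp w \<Longrightarrow> Sp z \<subseteq> Sp w"
  unfolding Sp_def using bmul_bmul by auto

definition bcl :: "'v set \<Rightarrow> bool" where
  "bcl X \<longleftrightarrow> (\<forall>c z. z \<in> X \<longrightarrow> bmul c z \<in> X)"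

lemma bcl_G: assumes "S \<in> G" shows "bcl S"
proof -
  obtain w where "S = Sp w" using G_Sp[OF assms] by blast
  then show ?thesis unfolding bcl_def Sp_def using bmul_bmul by auto
qed

lemma bcl_Sp: "bcl X \<Longrightarrow> z \<in> X \<Longrightarrow> Sp z \<subseteq> X"
  unfolding bcl_def Sp_def by auto

lemma bcl_ssum: "bcl A \<Longrightarrow> bcl B \<Longrightarrow> bcl (ssum A B)"
  unfolding bcl_def ssum_def by (auto simp: bmul_add) blast

lemma bcl_UNIV: "bcl UNIV" unfolding bcl_def by simp

lemma G_eq: assumes "S \<in> G" "z \<in> S" "z \<noteq> 0" shows "Sp z = S"
proof -
  have "Sp z \<subseteq> S" using bcl_Sp[OF bcl_G[OF assms(1)] assms(2)] .
  moreover have "card (Sp z) = card S" using G_card Sp_G[OF assms(3)] assms(1) by simp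
  ultimately show ?thesis by (rule subspace_eq_card)
qed

lemma G_disj: assumes "S1 \<in> G" "S2 \<in> G" "S1 \<noteq> S2" shows "S1 \<inter> S2 = {0}"
proof -
  have "0 \<in> S1 \<inter> S2" using G_sub assms subspace_0 by blast
  moreover have "z = 0" if "z \<in> S1 \<inter> S2" for z
    using G_eq[OF assms(1), of z] G_eq[OF assms(2), of z] that assms(3) by auto
  ultimately show ?thesis by blast
qed

lemma part_count:
  assumes X: "subspace X" "bcl X"
  shows "card {S\<in>G. S \<subseteq> X} * (CARD('a) ^ 2 - 1) = card X - 1"
proof -
  have h1: "card (X - {0}) = (CARD('a) ^ 2 - 1) * card {S\<in>G. S \<subseteq> X}"
  proof (rule card_fibers[of _ _ Sp])
    show "Sp ` (X - {0}) \<subseteq> {S\<in>G. S \<subseteq> X}" using Sp_G bcl_Sp[OF X(2)] by blast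
  next
    fix S assume S: "S \<in> {S\<in>G. S \<subseteq> X}"
    have "{z \<in> X - {0}. Sp z = S} = S - {0}"
    proof (rule set_eqI, rule iffI)
      fix z assume "z \<in> {z \<in> X - {0}. Sp z = S}"
      then show "z \<in> S - {0}" using in_Sp[of z] by auto
    next
      fix z assume z: "z \<in> S - {0}"
      then have "Sp z = S" using G_eq[of S z] S by auto
      then show "z \<in> {z \<in> X - {0}. Sp z = S}" using z S by auto
    qed
    moreover have "card (S - {0}) = CARD('a) ^ 2 - 1"
      using S G_card G_sub subspace_0 fin[of S] by (simp add: card_Diff_singleton)
    ultimately show "card {z \<in> X - {0}. Sp z = S} = CARD('a) ^ 2 - 1" by simp
  qed (rule fin, rule fin2)
  have h2: "card (X - {0}) = card X - 1"
    using subspace_0[OF X(1)] fin[of X] by (simp add: card_Diff_singleton)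
  have "card {S\<in>G. S \<subseteq> X} * (CARD('a) ^ 2 - 1) = card (X - {0})"
    unfolding h1 by (rule mult.commute)
  then show ?thesis unfolding h2 .
qed

end

context fvs
begin

lemma dim_mono:
  assumes "subspace A" "subspace B" "A \<subseteq> B" shows "dim A \<le> dim B"
proof -
  have "card A \<le> card B" by (rule card_mono[OF fin assms(3)])
  then have "CARD('a) ^ dim A \<le> CARD('a) ^ dim B" using card_subspace assms by simp
  moreover have "1 < CARD('a)" using q_ge2 by simp
  ultimately show ?thesis using power_le_imp_le_exp by blast
qed

end

context dsetup
begin

lemma int_card:
  assumes S: "S \<in> G" and L: "subspace L" "dim L = 2" and Lnot: "\<not> L \<subseteq> S"
    and z: "z \<in> L" "z \<in> S" "z \<noteq> 0"
  shows "card (S \<inter> L) = CARD('a)"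
proof -
  have sub: "subspace (S \<inter> L)" using G_sub[OF S] L(1) subspace_inter by blast
  have "dim (S \<inter> L) \<le> dim L" by (rule dim_mono[OF sub L(1)]) auto
  moreover have "dim (S \<inter> L) \<noteq> 2"
  proof
    assume "dim (S \<inter> L) = 2"
    then have "S \<inter> L = L" using subspace_eq_dim[OF sub L(1)] L(2) by auto
    then show False using Lnot by auto
  qed
  moreover have "dim (S \<inter> L) \<noteq> 0"
  proof
    assume "dim (S \<inter> L) = 0"
    then have "card (S \<inter> L) = 1" using card_subspace[OF sub] by simp
    moreover have "card {0, z} \<le> card (S \<inter> L)"
      by (intro card_mono fin) (use z subspace_0[OF sub] in auto)
    ultimately show False using z by simp
  qed
  ultimately have "dim (S \<inter> L) = 1" using L(2) by linarith
  then show ?thesis using card_subspace[OF sub] by simp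
qed

lemma Y_count:
  assumes L: "subspace L" "dim L = 2" and Lnot: "\<forall>S\<in>G. \<not> L \<subseteq> S"
  shows "card {S\<in>G. \<exists>z\<in>L. z \<noteq> 0 \<and> z \<in> S} * (CARD('a) - 1) = CARD('a)^2 - 1"
proof -
  let ?Y = "{S\<in>G. \<exists>z\<in>L. z \<noteq> 0 \<and> z \<in> S}"
  have h1: "card (L - {0}) = (CARD('a) - 1) * card ?Y"
  proof (rule card_fibers[of _ _ Sp])
    show "Sp ` (L - {0}) \<subseteq> ?Y" using Sp_G in_Sp by blast
  next
    fix S assume S: "S \<in> ?Y"
    then obtain z where z: "S \<in> G" "z \<in> L" "z \<noteq> 0" "z \<in> S" by blast
    have "{w \<in> L - {0}. Sp w = S} = (S \<inter> L) - {0}"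
    proof (rule set_eqI, rule iffI)
      fix w assume "w \<in> {w \<in> L - {0}. Sp w = S}"
      then show "w \<in> (S \<inter> L) - {0}" using in_Sp[of w] by auto
    next
      fix w assume w: "w \<in> (S \<inter> L) - {0}"
      then have "Sp w = S" using G_eq[of S w] z by auto
      then show "w \<in> {w \<in> L - {0}. Sp w = S}" using w by auto
    qed
    moreover have "card (S \<inter> L) = CARD('a)"
      using int_card[OF z(1) L] Lnot z by blast
    moreover have "0 \<in> S \<inter> L" using G_sub[OF z(1)] L(1) subspace_0 by blast
    ultimately show "card {w \<in> L - {0}. Sp w = S} = CARD('a) - 1"
      using fin[of "S \<inter> L"] by (simp add: card_Diff_singleton)
  qed (rule fin, rule fin2)
  have h2: "card (L - {0}) = CARD('a)^2 - 1"
    using subspace_0[OF L(1)] fin[of L] card_subspace[OF L(1)] L(2) by (simp add: card_Diff_singleton)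
  have "card ?Y * (CARD('a) - 1) = card (L - {0})"
    unfolding h1 by (rule mult.commute)
  then show ?thesis unfolding h2 .
qed

lemma card_ssum_triv:
  assumes "subspace A" "subspace B" "A \<inter> B = {0}"
  shows "card (ssum A B) = card A * card B"
  using card_ssum'[OF assms(1,2)] assms(3) by simp

lemma two_G_bcl:
  assumes B: "subspace B" "card B = CARD('a)^4" and S: "S1 \<in> G" "S2 \<in> G" "S1 \<noteq> S2" "S1 \<subseteq> B" "S2 \<subseteq> B"
  shows "bcl B"
proof -
  have c: "card (ssum S1 S2) = CARD('a)^4"
    using card_ssum_triv[OF G_sub[OF S(1)] G_sub[OF S(2)] G_disj[OF S(1-3)]] G_card S(1,2)
    by (simp add: power_add[symmetric])
  have "ssum S1 S2 \<subseteq> B" using ssum_least[OF B(1) S(4,5)] .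
  then have "ssum S1 S2 = B" using subspace_eq_card c B(2) by simp
  then show ?thesis using bcl_ssum[OF bcl_G[OF S(1)] bcl_G[OF S(2)]] by simp
qed

end

context dsetup
begin

lemma main_count:
  assumes L: "subspace L" "dim L = 2" and Lnot: "\<forall>S\<in>G. \<not> L \<subseteq> S"
    and n: "dim (UNIV :: 'v set) = n" "n \<ge> 4"
  shows "\<exists>b t c1 c2 nn gG gG1 y.
     card {B. subspace B \<and> dim B = 4 \<and> L \<subseteq> B \<and> \<not> (\<exists>S\<in>G. S \<subseteq> B)} = b - nn \<and>
     t * (CARD('a)^3 - CARD('a)^2) = CARD('a)^n - CARD('a)^2 \<and>
     c1 * (CARD('a)^4 - CARD('a)^3) = CARD('a)^n - CARD('a)^3 \<and>
     c2 * (CARD('a)^3 - CARD('a)^2) = CARD('a)^4 - CARD('a)^2 \<and>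
     t * c1 = b * c2 \<and>
     gG * (CARD('a)^2 - 1) = CARD('a)^n - 1 \<and>
     gG1 * (CARD('a)^2 - 1) = CARD('a)^4 - 1 \<and>
     y * (CARD('a) - 1) = CARD('a)^2 - 1 \<and>
     nn = 1 + (gG - gG1) + y * (c1 - 1) \<and> gG1 \<le> gG \<and> c1 \<ge> 1 \<and> nn \<le> b"
proof -
  define Q where "Q = CARD('a)"
  have Q2: "Q \<ge> 2" unfolding Q_def by (rule q_ge2)
  define BB where "BB = {B. subspace B \<and> dim B = 4 \<and> L \<subseteq> B}"
  define TT where "TT = {T. subspace T \<and> L \<subseteq> T \<and> T \<subseteq> UNIV \<and> dim T = Suc (dim L)}"
  define c1 where "c1 = (Q^n - Q^3) div (Q^4 - Q^3)"
  have cardL: "card L = Q^2" using card_subspace[OF L(1)] L(2) Q_def by simp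
  have Q43: "Q^4 - Q^3 > 0"
  proof -
    have "Q^3 < Q^4" using Q2 by (intro power_strict_increasing) auto
    then show ?thesis by simp
  qed
  have cnt4: "card {B. subspace B \<and> T \<subseteq> B \<and> dim B = 4} = c1" if T: "subspace T" "dim T = 3" for T
  proof -
    have "card {B. subspace B \<and> T \<subseteq> B \<and> B \<subseteq> UNIV \<and> dim B = Suc (dim T)} * (Q ^ Suc (dim T) - Q ^ dim T)
          = Q ^ dim (UNIV :: 'v set) - Q ^ dim T"
      unfolding Q_def by (rule count_ext[OF T(1) subspace_UNIV subset_UNIV])
    moreover have "{B. subspace B \<and> T \<subseteq> B \<and> B \<subseteq> UNIV \<and> dim B = Suc (dim T)} = {B. subspace B \<and> T \<subseteq> B \<and> dim B = 4}"
      using T(2) by auto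
    ultimately have e: "card {B. subspace B \<and> T \<subseteq> B \<and> dim B = 4} * (Q^4 - Q^3) = Q^n - Q^3"
      using T(2) n(1) by (simp add: numeral_eq_Suc)
    have "card {B. subspace B \<and> T \<subseteq> B \<and> dim B = 4} * (Q^4 - Q^3) div (Q^4 - Q^3)
          = card {B. subspace B \<and> T \<subseteq> B \<and> dim B = 4}"
      using Q43 by (intro nonzero_mult_div_cancel_right) simp
    then show ?thesis unfolding c1_def e by (rule sym)
  qed
  have ht: "card TT * (Q^3 - Q^2) = Q^n - Q^2"
    using count_ext[OF L(1) subspace_UNIV subset_UNIV] L(2) n(1)
    unfolding TT_def Q_def by (simp add: numeral_eq_Suc)
  have hc1: "c1 * (Q^4 - Q^3) = Q^n - Q^3"
  proof -
    obtain T where "T \<in> TT"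
    proof -
      have lt: "Q^2 < Q^n" using Q2 n(2) by (intro power_strict_increasing) auto
      have "card TT \<noteq> 0"
      proof
        assume "card TT = 0"
        then have "Q^n - Q^2 = 0" using ht by simp
        then show False using lt by simp
      qed
      then show ?thesis using that by fastforce
    qed
    then have T: "subspace T" "dim T = 3" unfolding TT_def using L(2) by auto
    have "card {B. subspace B \<and> T \<subseteq> B \<and> B \<subseteq> UNIV \<and> dim B = Suc (dim T)} * (Q ^ Suc (dim T) - Q ^ dim T)
          = Q ^ dim (UNIV :: 'v set) - Q ^ dim T"
      unfolding Q_def by (rule count_ext[OF T(1) subspace_UNIV subset_UNIV])
    moreover have "{B. subspace B \<and> T \<subseteq> B \<and> B \<subseteq> UNIV \<and> dim B = Suc (dim T)} = {B. subspace B \<and> T \<subseteq> B \<and> dim B = 4}"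
      using T(2) by auto
    ultimately show ?thesis using cnt4[OF T] T(2) n(1) by (simp add: numeral_eq_Suc)
  qed
  have "L \<noteq> {0}"
  proof
    assume "L = {0}"
    then have "card L = 1" by simp
    moreover have "Q^2 \<ge> 2^2" using Q2 by (intro power_mono) auto
    ultimately show False using cardL by simp
  qed
  then obtain x where x: "x \<in> L" "x \<noteq> 0" using subspace_0[OF L(1)] by blast
  have SxG: "Sp x \<in> G" using Sp_G x(2) by blast
  obtain y where y: "y \<in> L" "y \<notin> Sp x" using Lnot SxG by blast
  have y0: "y \<noteq> 0" using y zero_Sp by metis
  have SyG: "Sp y \<in> G" using Sp_G y0 by blast
  have SxSy: "Sp x \<noteq> Sp y" using y(2) in_Sp by metis
  define M where "M = ssum (Sp x) (Sp y)"
  have Msub: "subspace M" unfolding M_def by (rule subspace_ssum[OF G_sub[OF SxG] G_sub[OF SyG]])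
  have Mcard: "card M = Q^4" unfolding M_def
    using card_ssum_triv[OF G_sub[OF SxG] G_sub[OF SyG] G_disj[OF SxG SyG SxSy]] G_card[OF SxG] G_card[OF SyG]
    unfolding Q_def by (simp add: power_add[symmetric])
  have "CARD('a) ^ dim M = CARD('a) ^ 4" using card_subspace[OF Msub] Mcard unfolding Q_def by simp
  then have Mdim: "dim M = 4" by (rule pow_inj)
  have Mbcl: "bcl M" unfolding M_def by (rule bcl_ssum[OF bcl_G[OF SxG] bcl_G[OF SyG]])
  have xM: "Sp x \<subseteq> M" "Sp y \<subseteq> M" unfolding M_def
    using ssum_sup1[OF G_sub[OF SyG]] ssum_sup2[OF G_sub[OF SxG]] by auto
  have LM: "L \<subseteq> M"
  proof -
    have spx: "span {x} \<subseteq> Sp x" by (rule span_minimal) (use in_Sp G_sub[OF SxG] in auto)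
    have "x \<notin> span {}" using x(2) by simp
    then have cx: "card (span {x}) = Q" using card_span_insert[of x "{}"] unfolding Q_def by simp
    have yx: "y \<notin> span {x}" using spx y(2) by blast
    then have cxy: "card (span {y, x}) = Q^2" using card_span_insert[of y "{x}"] cx unfolding Q_def
      by (simp add: power2_eq_square)
    have "span {y, x} \<subseteq> L" by (rule span_minimal) (use x y L(1) in auto)
    then have "span {y, x} = L" using subspace_eq_card cxy cardL by metis
    moreover have "span {y, x} \<subseteq> M" by (rule span_minimal) (use xM in_Sp Msub in auto)
    ultimately show ?thesis by simp
  qed
  have MBB: "M \<in> BB" unfolding BB_def using Msub Mdim LM by simp
  have cardBB: "card B = Q^4" if "B \<in> BB" for B
    using that card_subspace unfolding BB_def Q_def by auto
  have keyM: "B = M" if B: "B \<in> BB" and S: "S1 \<in> G" "S2 \<in> G" "S1 \<noteq> S2" "S1 \<subseteq> B" "S2 \<subseteq> B" for B S1 S2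
  proof -
    have Bsub: "subspace B" using B unfolding BB_def by simp
    have "bcl B" using two_G_bcl[OF Bsub _ S] cardBB[OF B] unfolding Q_def by simp
    moreover have "x \<in> B" "y \<in> B" using B x y unfolding BB_def by auto
    ultimately have "Sp x \<subseteq> B" "Sp y \<subseteq> B" using bcl_Sp by auto
    then have "M \<subseteq> B" unfolding M_def by (rule ssum_least[OF Bsub])
    then show ?thesis using subspace_eq_card Mcard cardBB[OF B] by metis
  qed
  have Q32: "Q^3 - Q^2 > 0"
  proof -
    have "Q^2 < Q^3" using Q2 by (intro power_strict_increasing) auto
    then show ?thesis by simp
  qed
  have cnt3e: "card {T\<in>TT. T \<subseteq> B} * (Q^3 - Q^2) = Q^4 - Q^2" if B: "B \<in> BB" for B
  proof -
    have Bsub: "subspace B" "L \<subseteq> B" "dim B = 4" using B unfolding BB_def by auto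
    have "card {T. subspace T \<and> L \<subseteq> T \<and> T \<subseteq> B \<and> dim T = Suc (dim L)} * (Q ^ Suc (dim L) - Q ^ dim L)
          = Q ^ dim B - Q ^ dim L"
      unfolding Q_def by (rule count_ext[OF L(1) Bsub(1,2)])
    moreover have "{T\<in>TT. T \<subseteq> B} = {T. subspace T \<and> L \<subseteq> T \<and> T \<subseteq> B \<and> dim T = Suc (dim L)}"
      unfolding TT_def by auto
    ultimately show ?thesis using L(2) Bsub(3) by (simp add: numeral_eq_Suc)
  qed
  define c2 where "c2 = card {T\<in>TT. T \<subseteq> M}"
  have hc2: "c2 * (Q^3 - Q^2) = Q^4 - Q^2" unfolding c2_def by (rule cnt3e[OF MBB])
  have cnt3: "card {T\<in>TT. T \<subseteq> B} = c2" if B: "B \<in> BB" for B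
    using cnt3e[OF B] hc2 Q32 by (metis mult_right_cancel not_gr0)
  have dc: "(\<Sum>T\<in>TT. card {B\<in>BB. T \<subseteq> B}) = (\<Sum>B\<in>BB. card {T\<in>TT. T \<subseteq> B})"
    by (rule double_count[OF fin2 fin2])
  have "(\<Sum>T\<in>TT. card {B\<in>BB. T \<subseteq> B}) = (\<Sum>T\<in>TT. c1)"
  proof (rule sum.cong[OF refl])
    fix T assume T: "T \<in> TT"
    then have "{B\<in>BB. T \<subseteq> B} = {B. subspace B \<and> T \<subseteq> B \<and> dim B = 4}"
      unfolding TT_def BB_def by auto
    moreover have "subspace T" "dim T = 3" using T L(2) unfolding TT_def by auto
    ultimately show "card {B\<in>BB. T \<subseteq> B} = c1" using cnt4 by simp
  qed
  moreover have "(\<Sum>B\<in>BB. card {T\<in>TT. T \<subseteq> B}) = (\<Sum>B\<in>BB. c2)"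
    by (rule sum.cong[OF refl]) (rule cnt3)
  ultimately have hd: "card TT * c1 = card BB * c2" using dc by simp
  define N where "N = {B\<in>BB. \<exists>S\<in>G. S \<subseteq> B}"
  have scat: "{B. subspace B \<and> dim B = 4 \<and> L \<subseteq> B \<and> \<not> (\<exists>S\<in>G. S \<subseteq> B)} = BB - N"
    unfolding BB_def N_def by auto
  have NBB: "N \<subseteq> BB" unfolding N_def by auto
  have MN: "M \<in> N" unfolding N_def using MBB xM SxG by blast
  define C where "C S = {B\<in>BB. S \<subseteq> B \<and> B \<noteq> M}" for S
  have NU: "N - {M} = (\<Union>S\<in>G. C S)" unfolding N_def C_def by auto
  have cardNU: "card (\<Union>S\<in>G. C S) = (\<Sum>S\<in>G. card (C S))"
  proof (rule card_UN_disjoint)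
    show "finite G" by (rule fin2)
    show "\<forall>i\<in>G. finite (C i)" using fin2 by blast
    show "\<forall>S1\<in>G. \<forall>S2\<in>G. S1 \<noteq> S2 \<longrightarrow> C S1 \<inter> C S2 = {}"
      using keyM unfolding C_def by blast
  qed
  have cardN: "card N = 1 + (\<Sum>S\<in>G. card (C S))"
  proof -
    have "card (N - {M}) = card N - 1" using MN fin2[of N] by (simp add: card_Diff_singleton)
    moreover have "card N \<ge> 1" using MN fin2[of N] by (metis One_nat_def Suc_leI card_gt_0_iff empty_iff)
    ultimately show ?thesis using NU cardNU by simp
  qed
  define M1 where "M1 = {S\<in>G. S \<subseteq> M}"
  define Y where "Y = {S\<in>G. \<exists>z\<in>L. z \<noteq> 0 \<and> z \<in> S}"
  have YM1: "Y \<subseteq> M1"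
  proof
    fix S assume "S \<in> Y"
    then obtain z where z: "S \<in> G" "z \<in> L" "z \<noteq> 0" "z \<in> S" unfolding Y_def by blast
    then have "Sp z = S" using G_eq by blast
    moreover have "Sp z \<subseteq> M" using bcl_Sp[OF Mbcl] z LM by blast
    ultimately show "S \<in> M1" unfolding M1_def using z by blast
  qed
  have M1G: "M1 \<subseteq> G" unfolding M1_def by auto
  have L0: "0 \<in> L" using subspace_0[OF L(1)] .
  have M0: "0 \<in> M" using subspace_0[OF Msub] .
  have c_out: "card (C S) = 1" if S: "S \<in> G" "S \<notin> M1" for S
  proof -
    have Ssub: "subspace S" using G_sub[OF S(1)] .
    have S0: "0 \<in> S" using subspace_0[OF Ssub] .
    have SM: "S \<inter> M = {0}"
    proof -
      have "z = 0" if "z \<in> S" "z \<in> M" for z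
      proof (rule ccontr)
        assume "z \<noteq> 0"
        then have "Sp z = S" using G_eq S(1) that by blast
        moreover have "Sp z \<subseteq> M" using bcl_Sp[OF Mbcl] that by blast
        ultimately show False using S unfolding M1_def by blast
      qed
      then show ?thesis using S0 M0 by blast
    qed
    have LS: "L \<inter> S = {0}" using SM LM L0 S0 by blast
    define D where "D = ssum L S"
    have Dsub: "subspace D" unfolding D_def by (rule subspace_ssum[OF L(1) Ssub])
    have Dcard: "card D = Q^4" unfolding D_def using card_ssum_triv[OF L(1) Ssub LS] cardL G_card[OF S(1)]
      unfolding Q_def by (simp add: power_add[symmetric])
    have "CARD('a) ^ dim D = CARD('a) ^ 4" using card_subspace[OF Dsub] Dcard unfolding Q_def by simp
    then have Ddim: "dim D = 4" by (rule pow_inj)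
    have LD: "L \<subseteq> D" unfolding D_def by (rule ssum_sup1[OF Ssub])
    have SD: "S \<subseteq> D" unfolding D_def by (rule ssum_sup2[OF L(1)])
    have DM: "D \<noteq> M" using SD S unfolding M1_def by blast
    have "C S = {D}"
    proof (rule set_eqI, rule iffI)
      fix B assume "B \<in> C S"
      then have B: "B \<in> BB" "S \<subseteq> B" unfolding C_def by auto
      then have "D \<subseteq> B" unfolding D_def using ssum_least BB_def by auto
      then have "D = B" using subspace_eq_card Dcard cardBB[OF B(1)] by metis
      then show "B \<in> {D}" by simp
    next
      fix B assume "B \<in> {D}"
      then show "B \<in> C S" unfolding C_def BB_def using Dsub Ddim LD SD DM by auto
    qed
    then show ?thesis by simp
  qed
  have c_mid: "card (C S) = 0" if S: "S \<in> M1" "S \<notin> Y" for S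
  proof -
    have SG: "S \<in> G" "S \<subseteq> M" using S unfolding M1_def by auto
    have Ssub: "subspace S" using G_sub[OF SG(1)] .
    have S0: "0 \<in> S" using subspace_0[OF Ssub] .
    have LS: "L \<inter> S = {0}" using S SG L0 S0 unfolding Y_def by blast
    define D where "D = ssum L S"
    have Dcard: "card D = Q^4" unfolding D_def using card_ssum_triv[OF L(1) Ssub LS] cardL G_card[OF SG(1)]
      unfolding Q_def by (simp add: power_add[symmetric])
    have "D \<subseteq> M" unfolding D_def by (rule ssum_least[OF Msub LM SG(2)])
    then have DM: "D = M" using subspace_eq_card Dcard Mcard by metis
    have "C S = {}"
    proof (rule ccontr)
      assume "C S \<noteq> {}"
      then obtain B where "B \<in> C S" by blast
      then have B: "B \<in> BB" "S \<subseteq> B" "B \<noteq> M" unfolding C_def by auto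
      then have "D \<subseteq> B" unfolding D_def using ssum_least BB_def by auto
      then have "D = B" using subspace_eq_card Dcard cardBB[OF B(1)] by metis
      then show False using DM B(3) by simp
    qed
    then show ?thesis by simp
  qed
  have c_in: "card (C S) = c1 - 1" if S: "S \<in> Y" for S
  proof -
    obtain z where z: "S \<in> G" "z \<in> L" "z \<noteq> 0" "z \<in> S" using S unfolding Y_def by blast
    have SM: "S \<subseteq> M" using YM1 S unfolding M1_def by blast
    have Ssub: "subspace S" using G_sub[OF z(1)] .
    have cSL: "card (S \<inter> L) = Q" using int_card[OF z(1) L] Lnot z unfolding Q_def by blast
    define T where "T = ssum L S"
    have Tsub: "subspace T" unfolding T_def by (rule subspace_ssum[OF L(1) Ssub])
    have "card (L \<inter> S) * card T = card L * card S" unfolding T_def by (rule card_ssum'[OF L(1) Ssub])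
    then have "Q * card T = Q * Q^3" using cSL cardL G_card[OF z(1)] unfolding Q_def
      by (simp add: Int_commute power_numeral_reduce)
    then have Tcard: "card T = Q^3" using Q2 by simp
    have "CARD('a) ^ dim T = CARD('a) ^ 3" using card_subspace[OF Tsub] Tcard unfolding Q_def by simp
    then have Tdim: "dim T = 3" by (rule pow_inj)
    have LT: "L \<subseteq> T" unfolding T_def by (rule ssum_sup1[OF Ssub])
    have ST: "S \<subseteq> T" unfolding T_def by (rule ssum_sup2[OF L(1)])
    have TM: "T \<subseteq> M" unfolding T_def by (rule ssum_least[OF Msub LM SM])
    have "C S = {B. subspace B \<and> T \<subseteq> B \<and> dim B = 4} - {M}"
    proof (rule set_eqI, rule iffI)
      fix B assume "B \<in> C S"
      then have B: "subspace B" "dim B = 4" "L \<subseteq> B" "S \<subseteq> B" "B \<noteq> M" unfolding C_def BB_def by auto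
      then have "T \<subseteq> B" unfolding T_def using ssum_least by blast
      then show "B \<in> {B. subspace B \<and> T \<subseteq> B \<and> dim B = 4} - {M}" using B by auto
    next
      fix B assume "B \<in> {B. subspace B \<and> T \<subseteq> B \<and> dim B = 4} - {M}"
      then show "B \<in> C S" unfolding C_def BB_def using LT ST by auto
    qed
    moreover have "M \<in> {B. subspace B \<and> T \<subseteq> B \<and> dim B = 4}" using Msub TM Mdim by simp
    ultimately show ?thesis using cnt4[OF Tsub Tdim] fin2 by (simp add: card_Diff_singleton)
  qed
  have sumC: "(\<Sum>S\<in>G. card (C S)) = card (G - M1) + card Y * (c1 - 1)"
  proof -
    have "(\<Sum>S\<in>G. card (C S)) = (\<Sum>S\<in>G - M1. card (C S)) + (\<Sum>S\<in>M1. card (C S))"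
      by (rule sum.subset_diff[OF M1G fin2])
    moreover have "(\<Sum>S\<in>G - M1. card (C S)) = (\<Sum>S\<in>G - M1. 1)"
      by (rule sum.cong[OF refl]) (use c_out in blast)
    moreover have "(\<Sum>S\<in>M1. card (C S)) = (\<Sum>S\<in>M1 - Y. card (C S)) + (\<Sum>S\<in>Y. card (C S))"
      by (rule sum.subset_diff[OF YM1 fin2])
    moreover have "(\<Sum>S\<in>M1 - Y. card (C S)) = (\<Sum>S\<in>M1 - Y. 0)"
      by (rule sum.cong[OF refl]) (use c_mid in blast)
    moreover have "(\<Sum>S\<in>Y. card (C S)) = (\<Sum>S\<in>Y. c1 - 1)"
      by (rule sum.cong[OF refl]) (use c_in in blast)
    ultimately show ?thesis by simp
  qed
  have hG: "card G * (Q^2 - 1) = Q^n - 1"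
  proof -
    have "card {S\<in>G. S \<subseteq> UNIV} * (CARD('a)^2 - 1) = card (UNIV :: 'v set) - 1"
      by (rule part_count[OF subspace_UNIV bcl_UNIV])
    then show ?thesis using card_subspace[OF subspace_UNIV] n(1) unfolding Q_def by simp
  qed
  have hG1: "card M1 * (Q^2 - 1) = Q^4 - 1"
    using part_count[OF Msub Mbcl] Mcard unfolding M1_def Q_def by simp
  have hy: "card Y * (Q - 1) = Q^2 - 1"
    using Y_count[OF L Lnot] unfolding Y_def Q_def .
  have c1pos: "c1 \<ge> 1"
  proof -
    have lt: "Q^3 < Q^n" using Q2 n(2) by (intro power_strict_increasing) auto
    have "c1 \<noteq> 0"
    proof
      assume "c1 = 0"
      then have "Q^n - Q^3 = 0" using hc1 by simp
      then show False using lt by simp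
    qed
    then show ?thesis by simp
  qed
  have nnle: "card N \<le> card BB" by (rule card_mono[OF fin2 NBB])
  have g1le: "card M1 \<le> card G" by (rule card_mono[OF fin2 M1G])
  have cardscat: "card {B. subspace B \<and> dim B = 4 \<and> L \<subseteq> B \<and> \<not> (\<exists>S\<in>G. S \<subseteq> B)} = card BB - card N"
    unfolding scat by (rule card_Diff_subset[OF fin2 NBB])
  have nn: "card N = 1 + (card G - card M1) + card Y * (c1 - 1)"
    using cardN sumC card_Diff_subset[OF fin2 M1G] by simp
  show ?thesis
    apply (rule exI[of _ "card BB"], rule exI[of _ "card TT"], rule exI[of _ c1], rule exI[of _ c2],
           rule exI[of _ "card N"], rule exI[of _ "card G"], rule exI[of _ "card M1"], rule exI[of _ "card Y"])
    using cardscat ht hc1 hc2 hd hG hG1 hy nn g1le c1pos nnle unfolding Q_def by blast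
qed

end

lemma rdiff: "(Q::nat) \<ge> 1 \<Longrightarrow> a \<le> b \<Longrightarrow> real (Q^b - Q^a) = real Q ^ b - real Q ^ a"
  by (simp add: of_nat_diff power_increasing)

lemma rdiff1: "(Q::nat) \<ge> 1 \<Longrightarrow> real (Q^b - 1) = real Q ^ b - 1"
  by (simp add: of_nat_diff one_le_power)

lemma ident0:
  fixes a b P :: real assumes a: "a \<noteq> 0" and b: "b \<noteq> 0" and hb: "b = a + 2"
  shows "(P * (a+1)^2 - 1) / a * ((P * (a+1) - 1) / a) / b - 1
           - ((P * (a+1)^4 - 1) / (a * b) - ((a+1)^4 - 1) / (a * b)) - b * ((P * (a+1) - 1) / a - 1)
         = (P * (a+1)^2 - 1) / (a * b) * ((P * (a+1) - 1) / a) - 1 - (a+1) * b * ((P - 1) / a)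
           - (P * (a+1)^4 - 1) / a / b + ((a+1)^4 - 1) / a / b"
  using a b by (simp add: field_simps)

lemma ident:
  fixes r P :: real assumes r: "r > 1"
  shows "(P * r^2 - 1) / (r - 1) * ((P * r - 1) / (r - 1)) / (r + 1) - 1
           - ((P * r^4 - 1) / (r^2 - 1) - (r^4 - 1) / (r^2 - 1)) - (r + 1) * ((P * r - 1) / (r - 1) - 1)
         = (P * r^2 - 1) / (r^2 - 1) * ((P * r - 1) / (r - 1)) - 1 - r * ((r^2 - 1) / (r - 1)) * ((P - 1) / (r - 1))
           - (P * r^4 - 1) / (r - 1) / ((r^2 - 1) / (r - 1)) + (r^4 - 1) / (r - 1) / ((r^2 - 1) / (r - 1))"
proof -
  define a where "a = r - 1"
  define b where "b = r + 1"
  have ra: "r = a + 1" unfolding a_def by simp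
  have e: "r^2 - 1 = a * b" "r - 1 = a" "r + 1 = b"
    unfolding a_def b_def by (simp_all add: algebra_simps power2_eq_square)
  have a0: "a \<noteq> 0" "b \<noteq> 0" using r unfolding a_def b_def by auto
  have e2: "a * b / a = b" using a0 by simp
  have hb: "b = a + 2" unfolding a_def b_def by simp
  from ident0[OF a0 hb, of P] show ?thesis unfolding e e2 unfolding ra by (simp add: mult.assoc)
qed

lemma final_arith:
  fixes Q k b t cA cB nn gG gK y :: nat
  assumes Q: "Q \<ge> 2"
  and ht: "t * (Q^3 - Q^2) = Q^(k+4) - Q^2"
  and hc1: "cA * (Q^4 - Q^3) = Q^(k+4) - Q^3"
  and hc2: "cB * (Q^3 - Q^2) = Q^4 - Q^2"
  and hd: "t * cA = b * cB"
  and hG: "gG * (Q^2 - 1) = Q^(k+4) - 1"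
  and hG1: "gK * (Q^2 - 1) = Q^4 - 1"
  and hy: "y * (Q - 1) = Q^2 - 1"
  and hn: "nn = 1 + (gG - gK) + y * (cA - 1)" and le: "gK \<le> gG" "cA \<ge> 1" "nn \<le> b"
  shows "real (b - nn) = gauss_coeff Q (k+4 - 2) 2 - 1 - real Q * gauss_coeff Q 2 1 * gauss_coeff Q (k+4 - 4) 1
           - gauss_coeff Q (k+4) 1 / gauss_coeff Q 2 1 + gauss_coeff Q 4 1 / gauss_coeff Q 2 1"
proof -
  define r where "r = real Q"
  have r2: "r \<ge> 2" using Q unfolding r_def by simp
  have Q1: "Q \<ge> 1" using Q by simp
  have p1: "r - 1 > 0" "r^2 - 1 > 0" "r^3 - r^2 > 0" "r^4 - r^3 > 0" "r + 1 > 0"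
  proof -
    show "r - 1 > 0" using r2 by simp
    have "r^2 \<ge> 2^2" using r2 by (intro power_mono) auto
    then show "r^2 - 1 > 0" by simp
    have "r^3 - r^2 = r^2 * (r - 1)" by (simp add: algebra_simps power2_eq_square power3_eq_cube)
    then show "r^3 - r^2 > 0" using r2 by simp
    have "r^4 - r^3 = r^3 * (r - 1)" by (simp add: algebra_simps power_numeral_reduce)
    then show "r^4 - r^3 > 0" using r2 by simp
    show "r + 1 > 0" using r2 by simp
  qed
  have d32: "real (Q^3 - Q^2) = r^3 - r^2" using rdiff[OF Q1, of 2 3] by (simp add: r_def)
  have d43: "real (Q^4 - Q^3) = r^4 - r^3" using rdiff[OF Q1, of 3 4] by (simp add: r_def)
  have d42: "real (Q^4 - Q^2) = r^4 - r^2" using rdiff[OF Q1, of 2 4] by (simp add: r_def)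
  have dk2: "real (Q^(k+4) - Q^2) = r^k * r^4 - r^2" using rdiff[OF Q1, of 2 "k+4"] by (simp add: r_def power_add)
  have dk3: "real (Q^(k+4) - Q^3) = r^k * r^4 - r^3" using rdiff[OF Q1, of 3 "k+4"] by (simp add: r_def power_add)
  have dk1: "real (Q^(k+4) - 1) = r^k * r^4 - 1" using rdiff1[OF Q1, of "k+4"] by (simp add: r_def power_add)
  have d41: "real (Q^4 - 1) = r^4 - 1" using rdiff1[OF Q1, of 4] by (simp add: r_def)
  have d21: "real (Q^2 - 1) = r^2 - 1" using rdiff1[OF Q1, of 2] by (simp add: r_def)
  have d11: "real (Q - 1) = r - 1" using Q1 by (simp add: r_def of_nat_diff)
  have et: "real t * (r^3 - r^2) = r^k * r^4 - r^2"
    using arg_cong[OF ht, of real] unfolding of_nat_mult d32 dk2 .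
  have ec1: "real cA * (r^4 - r^3) = r^k * r^4 - r^3"
    using arg_cong[OF hc1, of real] unfolding of_nat_mult d43 dk3 .
  have ec2: "real cB * (r^3 - r^2) = r^4 - r^2"
    using arg_cong[OF hc2, of real] unfolding of_nat_mult d32 d42 .
  have ed: "real t * real cA = real b * real cB" using arg_cong[OF hd, of real] by simp
  have eG: "real gG * (r^2 - 1) = r^k * r^4 - 1"
    using arg_cong[OF hG, of real] unfolding of_nat_mult d21 dk1 .
  have eG1: "real gK * (r^2 - 1) = r^4 - 1"
    using arg_cong[OF hG1, of real] unfolding of_nat_mult d21 d41 .
  have ey: "real y * (r - 1) = r^2 - 1"
    using arg_cong[OF hy, of real] unfolding of_nat_mult d21 d11 .
  have en: "real (b - nn) = real b - 1 - (real gG - real gK) - real y * (real cA - 1)"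
    using hn le by (simp add: of_nat_diff)
  have rp: "r^2 > 0" "r^3 > 0" using r2 by simp_all
  have "r^2 * (real t * (r - 1)) = r^2 * (r^k * r^2 - 1)"
    using et by (simp add: algebra_simps numeral_eq_Suc)
  then have "real t * (r - 1) = r^k * r^2 - 1" using rp by simp
  then have vt: "real t = (r^k * r^2 - 1) / (r - 1)"
    using p1 by (simp add: field_simps)
  have "r^3 * (real cA * (r - 1)) = r^3 * (r^k * r - 1)"
    using ec1 by (simp add: algebra_simps numeral_eq_Suc)
  then have "real cA * (r - 1) = r^k * r - 1" using rp by simp
  then have vc1: "real cA = (r^k * r - 1) / (r - 1)"
    using p1 by (simp add: field_simps)
  have "r^2 * (real cB * (r - 1)) = r^2 * ((r + 1) * (r - 1))"
    using ec2 by (simp add: algebra_simps numeral_eq_Suc)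
  then have "real cB * (r - 1) = (r + 1) * (r - 1)" using rp by simp
  then have vc2: "real cB = r + 1"
    using p1 by simp
  have vb: "real b = real t * real cA / (r + 1)"
    using ed vc2 p1 by (simp add: field_simps)
  have ne2: "r^2 - 1 \<noteq> 0" using p1 by linarith
  have vG: "real gG = (r^k * r^4 - 1) / (r^2 - 1)"
    using eG ne2 by (simp add: eq_divide_eq)
  have vG1: "real gK = (r^4 - 1) / (r^2 - 1)"
    using eG1 ne2 by (simp add: eq_divide_eq)
  have "real y * (r - 1) = (r + 1) * (r - 1)" using ey by (simp add: algebra_simps power2_eq_square)
  then have vy: "real y = r + 1" using p1 by simp
  have gc: "gauss_coeff Q (k+4 - 2) 2 = (r^k * r^2 - 1) / (r^2 - 1) * ((r^k * r - 1) / (r - 1))"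
           "gauss_coeff Q 2 1 = (r^2 - 1) / (r - 1)"
           "gauss_coeff Q (k+4 - 4) 1 = (r^k - 1) / (r - 1)"
           "gauss_coeff Q (k+4) 1 = (r^k * r^4 - 1) / (r - 1)"
           "gauss_coeff Q 4 1 = (r^4 - 1) / (r - 1)"
    unfolding gauss_coeff_def r_def
    by (simp_all add: numeral_2_eq_2 lessThan_Suc power_add mult.commute)
  show ?thesis
    unfolding en gc vb vt vc1 vG vG1 vy r_def[symmetric]
    using ident[of r "r^k"] r2 by (simp add: mult.assoc)
qed

theorem lemma4:
  fixes scale :: "'a::{finite,field} \<Rightarrow> 'v::ab_group_add \<Rightarrow> 'v"
    and phi :: "'a \<Rightarrow> 'b::{finite,field}"
    and G :: "'v set set"
    and L :: "'v set"
    and q s v :: nat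
  assumes q_def: "q = CARD('a)"
    and b_card: "CARD('b) = q ^ 2"
    and phi: "field_emb phi"
    and s_def: "s = CARD('s::finite)"
    and s_ge: "s \<ge> 2"
    and v_def: "v = 2 * s"
    and vs: "vector_space scale"
    and dimV: "vector_space.dim scale (UNIV :: 'v set) = v"
    and spread: "is_1_spread scale G"
    and desarg: "is_desarguesian_spread phi TYPE('s) scale G"
    and L: "L \<in> subspaces_of_dim scale 2"
    and L_not: "\<forall>S \<in> G. \<not> L \<subseteq> S"
  shows "real (card {B \<in> subspaces_of_dim scale 4. L \<subseteq> B \<and> scattered scale G B}) =
           gauss_coeff q (v - 2) 2 - 1 - real q * gauss_coeff q 2 1 * gauss_coeff q (v - 4) 1
           - gauss_coeff q v 1 / gauss_coeff q 2 1 + gauss_coeff q 4 1 / gauss_coeff q 2 1"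
proof -
  interpret V: vector_space scale by (rule vs)
  obtain f :: "('s \<Rightarrow> 'b) \<Rightarrow> 'v" where lin: "Vector_Spaces.linear (restr_scale phi) scale f"
    and fbij: "bij f" and Gdef: "G = (\<lambda>P. f ` P) ` (desarg_spread_std :: ('s \<Rightarrow> 'b) set set)"
    using desarg unfolding is_desarguesian_spread_def by blast
  have mh: "module_hom (restr_scale phi) scale f" using lin by (simp add: module_hom_iff_linear)
  have finV: "finite (UNIV :: 'v set)"
  proof -
    have "UNIV = range f" using fbij by (simp add: bij_is_surj surj_def set_eq_iff)
    moreover have "finite (range f)" by (rule finite_imageI) simp
    ultimately show ?thesis by simp
  qed
  interpret F: fvs scale by (intro fvs.intro vs fvs_axioms.intro finV)
  have G2: "\<And>S. S \<in> G \<Longrightarrow> V.subspace S \<and> V.dim S = 2"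
    using spread unfolding is_1_spread_def subspaces_of_dim_def by blast
  interpret D: dsetup scale phi f G
  proof (intro dsetup.intro dsetup_axioms.intro)
    show "fvs scale" by (intro fvs.intro vs fvs_axioms.intro finV)
  qed (use module_hom.add[OF mh] module_hom.scale[OF mh] fbij Gdef G2 in auto)
  have Lsub: "V.subspace L" "V.dim L = 2" using L unfolding subspaces_of_dim_def by auto
  have v4: "v \<ge> 4" using s_ge v_def by simp
  obtain b t c1 c2 nn gG gG1 y where H:
     "card {B. V.subspace B \<and> V.dim B = 4 \<and> L \<subseteq> B \<and> \<not> (\<exists>S\<in>G. S \<subseteq> B)} = b - nn"
     "t * (CARD('a)^3 - CARD('a)^2) = CARD('a)^v - CARD('a)^2"
     "c1 * (CARD('a)^4 - CARD('a)^3) = CARD('a)^v - CARD('a)^3"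
     "c2 * (CARD('a)^3 - CARD('a)^2) = CARD('a)^4 - CARD('a)^2"
     "t * c1 = b * c2"
     "gG * (CARD('a)^2 - 1) = CARD('a)^v - 1"
     "gG1 * (CARD('a)^2 - 1) = CARD('a)^4 - 1"
     "y * (CARD('a) - 1) = CARD('a)^2 - 1"
     "nn = 1 + (gG - gG1) + y * (c1 - 1)" "gG1 \<le> gG" "c1 \<ge> 1" "nn \<le> b"
    using D.main_count[OF Lsub L_not dimV v4] by blast
  have sc: "scattered scale G B \<longleftrightarrow> \<not> (\<exists>S\<in>G. S \<subseteq> B)" for B
  proof -
    have "(\<exists>W\<in>subspaces_of_dim scale 2. W \<subseteq> B \<and> (\<exists>S\<in>G. W \<subseteq> S)) \<longleftrightarrow> (\<exists>S\<in>G. S \<subseteq> B)"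
    proof
      assume "\<exists>W\<in>subspaces_of_dim scale 2. W \<subseteq> B \<and> (\<exists>S\<in>G. W \<subseteq> S)"
      then obtain W S where W: "V.subspace W" "V.dim W = 2" "W \<subseteq> B" "S \<in> G" "W \<subseteq> S"
        unfolding subspaces_of_dim_def by blast
      then have "W = S" using F.subspace_eq_dim G2 by metis
      then show "\<exists>S\<in>G. S \<subseteq> B" using W by blast
    next
      assume "\<exists>S\<in>G. S \<subseteq> B"
      then obtain S where "S \<in> G" "S \<subseteq> B" by blast
      then show "\<exists>W\<in>subspaces_of_dim scale 2. W \<subseteq> B \<and> (\<exists>S\<in>G. W \<subseteq> S)"
        using G2 unfolding subspaces_of_dim_def by blast
    qed
    then show ?thesis unfolding scattered_def by simp
  qed
  have setEq: "{B \<in> subspaces_of_dim scale 4. L \<subseteq> B \<and> scattered scale G B}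
      = {B. V.subspace B \<and> V.dim B = 4 \<and> L \<subseteq> B \<and> \<not> (\<exists>S\<in>G. S \<subseteq> B)}"
    unfolding subspaces_of_dim_def sc by auto
  define k where "k = v - 4"
  have vk: "v = k + 4" using v4 unfolding k_def by simp
  have q2: "q \<ge> 2" unfolding q_def by (rule card_ge2)
  note H' = H[unfolded q_def[symmetric] vk]
  have R: "real (b - nn) = gauss_coeff q (k+4 - 2) 2 - 1 - real q * gauss_coeff q 2 1 * gauss_coeff q (k+4 - 4) 1
           - gauss_coeff q (k+4) 1 / gauss_coeff q 2 1 + gauss_coeff q 4 1 / gauss_coeff q 2 1"
    by (rule final_arith[where Q=q and k=k and b=b and t=t and cA=c1 and cB=c2 and nn=nn and gG=gG and gK=gG1 and y=y,
          OF q2 H'(2-12)])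
  show ?thesis unfolding setEq H(1) using R unfolding vk .
qed

end
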